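(* Let $d\ge 2$ and let $P\subset\mathbb{R}^d$ be a generic convex simplicial $d$-dimensional polytope. Then $P$ has at least $d+1$ BM-ears, i.e. the number of Delaunay BM-ears of $P$ plus the number of upper Delaunay BM-ears of $P$ is at least $d+1$.
   Context: $P$ is generic if no $d+2$ of its vertices lie on a common $(d-1)$-dimensional sphere and $P$ is not a $d$-simplex. Let $V$ be the vertex set of $P$ and $f:\mathbb{R}^d\to\mathbb{R}^{d+1}$, $f(x_1,\dots,x_d)=(x_1,\dots,x_d,x_1^2+\dots+x_d^2)$. Let $P'$ be the convex hull of $f(V)$; it is a $(d+1)$-dimensional simplicial polytope with vertex set $f(V)$, and no facet of $P'$ has an outer normal with zero last coordinate. A facet of $P'$ is lower if its outer normal has negative last coordinate and upper if it is positive. The orthogonal projections (forgetting the last coordinate) of the lower facets form the Delaunay triangulation $DT(P)$ of $P$ (the simplices with vertices in $V$ whose circumsphere has no vertex of $P$ inside), and those of the upper facets form the upper Delaunay triangulation $UDT(P)$ (simplices whose circumsphere has all other vertices of $P$ inside). A facet $F$ of $P'$ is visible from a point $A$ if $A$ and $P'$ lie in opposite open half-spaces of the hyperplane $\mathrm{aff}(F)$. A simplex of $DT(P)$ is a Delaunay BM-ear if it is the projection of a lower facet $F$ of $P'$ that is the last facet of a Bruggesser–Mani shelling of the complex of lower facets, i.e. there exist a point $A\in\mathbb{R}^{d+1}$ from which exactly the lower facets of $P'$ are visible and a point $O$ in the interior of $P'$ such that the segment $OA$ meets the hyperplanes spanned by the lower facets in distinct points and $\mathrm{aff}(F)$ is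 the last of them met when moving from $O$ to $A$. Upper Delaunay BM-ears are defined in the same way using upper facets, $UDT(P)$, and points $A$ from which exactly the upper facets of $P'$ are visible. A BM-ear is a Delaunay BM-ear or an upper Delaunay BM-ear. *)

theory Defs
  imports "HOL-Analysis.Analysis"
begin

text \<open>R^d is modelled by a euclidean space 'a with DIM('a) = d; R^(d+1) by 'a \<times> real,
  the last coordinate being the real component.\<close>

definition lift :: "'a::euclidean_space \<Rightarrow> 'a \<times> real" where
  "lift x = (x, (norm x)\<^sup>2)"

definition lifted_polytope :: "'a::euclidean_space set \<Rightarrow> ('a \<times> real) set" where
  "lifted_polytope V = convex hull (lift ` V)"

definition generic_simplicial_polytope :: "'a::euclidean_space set \<Rightarrow> bool" where
  "generic_simplicial_polytope V \<longleftrightarrow>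
     finite V \<and>
     V = {v. v extreme_point_of (convex hull V)} \<and>
     aff_dim (convex hull V) = int DIM('a) \<and>
     (\<forall>F. F facet_of (convex hull V) \<longrightarrow> (int DIM('a) - 1) simplex F) \<and>
     (\<forall>W. W \<subseteq> V \<and> card W = DIM('a) + 2 \<longrightarrow> \<not> (\<exists>c r. W \<subseteq> sphere c r)) \<and>
     \<not> (int DIM('a)) simplex (convex hull V)"

definition outer_normal :: "'b::euclidean_space set \<Rightarrow> 'b set \<Rightarrow> 'b \<Rightarrow> real \<Rightarrow> bool" where
  "outer_normal Q F n c \<longleftrightarrow> n \<noteq> 0 \<and> Q \<subseteq> {y. inner n y \<le> c} \<and> F \<subseteq> {y. inner n y = c}"

definition lower_facet :: "('a::euclidean_space \<times> real) set \<Rightarrow> ('a \<times> real) set \<Rightarrow> bool" where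
  "lower_facet Q F \<longleftrightarrow> F facet_of Q \<and> (\<exists>n c. outer_normal Q F n c \<and> snd n < 0)"

definition upper_facet :: "('a::euclidean_space \<times> real) set \<Rightarrow> ('a \<times> real) set \<Rightarrow> bool" where
  "upper_facet Q F \<longleftrightarrow> F facet_of Q \<and> (\<exists>n c. outer_normal Q F n c \<and> snd n > 0)"

definition visible :: "'b::euclidean_space set \<Rightarrow> 'b set \<Rightarrow> 'b \<Rightarrow> bool" where
  "visible Q F A \<longleftrightarrow> (\<exists>n c. outer_normal Q F n c \<and> inner n A > c)"

text \<open>F is the last facet of a Bruggesser-Mani shelling of the facets satisfying K
  (K = lower or upper): A sees exactly the K-facets, O is interior, the segment OA meets
  the hyperplanes of the K-facets in distinct points, and aff F is met last.\<close>
definition BM_last :: "(('a::euclidean_space \<times> real) set \<Rightarrow> bool) \<Rightarrow> ('a \<times> real) set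
    \<Rightarrow> ('a \<times> real) set \<Rightarrow> bool" where
  "BM_last K Q F \<longleftrightarrow> K F \<and>
     (\<exists>A Z p. (\<forall>G. G facet_of Q \<longrightarrow> (visible Q G A \<longleftrightarrow> K G)) \<and>
        Z \<in> interior Q \<and>
        (\<forall>G. K G \<longrightarrow> closed_segment Z A \<inter> affine hull G = {p G}) \<and>
        inj_on p {G. K G} \<and>
        (\<forall>G. K G \<and> G \<noteq> F \<longrightarrow> dist Z (p G) < dist Z (p F)))"

definition delaunay_BM_ears :: "'a::euclidean_space set \<Rightarrow> 'a set set" where
  "delaunay_BM_ears V =
     (\<lambda>F. fst ` F) ` {F. BM_last (lower_facet (lifted_polytope V)) (lifted_polytope V) F}"

definition upper_delaunay_BM_ears :: "'a::euclidean_space set \<Rightarrow> 'a set set" where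
  "upper_delaunay_BM_ears V =
     (\<lambda>F. fst ` F) ` {F. BM_last (upper_facet (lifted_polytope V)) (lifted_polytope V) F}"

end

theory Submission
  imports Defs
begin


lemma hyperplane_normal_unique:
  fixes N n :: "'b::euclidean_space"
  assumes N: "N \<noteq> 0" and sub: "{y. N \<bullet> y = c} \<subseteq> {y. n \<bullet> y = c'}"
  shows "n = (n \<bullet> N / (N \<bullet> N)) *\<^sub>R N \<and> c' = (n \<bullet> N / (N \<bullet> N)) * c"
proof -
  define \<mu> where "\<mu> = n \<bullet> N / (N \<bullet> N)"
  define w where "w = n - \<mu> *\<^sub>R N"
  have NN: "N \<bullet> N \<noteq> 0" using N by simp
  have wN: "N \<bullet> w = 0" using NN by (simp add: w_def \<mu>_def inner_diff_right inner_commute)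
  define y0 where "y0 = (c / (N \<bullet> N)) *\<^sub>R N"
  have y0: "N \<bullet> y0 = c" using NN by (simp add: y0_def)
  have 1: "n \<bullet> y0 = c'" using sub y0 by auto
  have "N \<bullet> (y0 + w) = c" using y0 wN by (simp add: inner_add_right)
  then have 2: "n \<bullet> (y0 + w) = c'" using sub by auto
  have nw: "n \<bullet> w = 0" using 1 2 by (simp add: inner_add_right)
  have "w \<bullet> w = n \<bullet> w - \<mu> * (N \<bullet> w)" by (simp add: w_def inner_diff_left)
  then have "w \<bullet> w = 0" using nw wN by simp
  then have "w = 0" by simp
  then have nN: "n = \<mu> *\<^sub>R N" by (simp add: w_def)
  have "c' = \<mu> * c" using 1 y0 nN by simp
  with nN show ?thesis by (simp add: \<mu>_def)
qed

definition facet_data :: "'b::euclidean_space set \<Rightarrow> 'b set \<Rightarrow> 'b \<Rightarrow> real \<Rightarrow> bool" where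
  "facet_data Q G N c \<longleftrightarrow> N \<noteq> 0 \<and> Q \<subseteq> {y. N \<bullet> y \<le> c} \<and> G = Q \<inter> {y. N \<bullet> y = c}
     \<and> affine hull G = {y. N \<bullet> y = c}"

lemma facet_data_exists:
  fixes Q :: "'b::euclidean_space set"
  assumes "polyhedron Q" "interior Q \<noteq> {}" "G facet_of Q"
  shows "\<exists>N c. facet_data Q G N c"
proof -
  obtain N c where N: "N \<noteq> 0" "Q \<subseteq> {x. N \<bullet> x \<le> c}" "G = Q \<inter> {x. N \<bullet> x = c}"
    using facet_of_polyhedron[OF assms(1,3)] by blast
  have "aff_dim Q = DIM('b)" using aff_dim_nonempty_interior assms(2) by blast
  then have "aff_dim G = DIM('b) - 1" using assms(3) by (simp add: facet_of_def)
  also have "\<dots> = aff_dim {x. N \<bullet> x = c}" using N by simp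
  finally have "affine hull G = affine hull {x. N \<bullet> x = c}"
    using aff_dim_eq_full_gen[of G "{x. N \<bullet> x = c}"] N(3) by blast
  also have "\<dots> = {x. N \<bullet> x = c}" by (simp add: affine_hyperplane hull_same)
  finally show ?thesis using N unfolding facet_data_def by blast
qed

lemma facet_data_interior_strict:
  assumes "facet_data Q G N c" "z \<in> interior Q"
  shows "N \<bullet> z < c"
proof -
  have "interior Q \<subseteq> interior {y. N \<bullet> y \<le> c}"
    using assms(1) by (intro interior_mono) (auto simp: facet_data_def)
  then show ?thesis using assms by (auto simp: facet_data_def)
qed

lemma facet_data_outer_normal_unique:
  assumes fd: "facet_data Q G N c" and z: "z \<in> interior Q" and on: "outer_normal Q G n c'"
  shows "\<exists>\<mu>>0. n = \<mu> *\<^sub>R N \<and> c' = \<mu> * c"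
proof -
  have N: "N \<noteq> 0" and ah: "affine hull G = {y. N \<bullet> y = c}" using fd by (auto simp: facet_data_def)
  have "G \<subseteq> {y. n \<bullet> y = c'}" using on by (auto simp: outer_normal_def)
  then have "affine hull G \<subseteq> {y. n \<bullet> y = c'}"
    by (simp add: affine_hyperplane hull_minimal)
  then obtain \<mu> where nN: "n = \<mu> *\<^sub>R N" "c' = \<mu> * c"
    using hyperplane_normal_unique[OF N] ah by metis
  have "z \<in> Q" using z interior_subset by blast
  then have "n \<bullet> z \<le> c'" using on by (auto simp: outer_normal_def)
  then have "\<mu> * (N \<bullet> z - c) \<le> 0" using nN by (simp add: algebra_simps)
  moreover have "N \<bullet> z - c < 0" using facet_data_interior_strict[OF fd z] by simp
  ultimately have "\<mu> \<ge> 0" by (simp add: mult_le_0_iff)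
  moreover have "\<mu> \<noteq> 0" using on nN by (auto simp: outer_normal_def)
  ultimately have "\<mu> > 0" by simp
  then show ?thesis using nN by blast
qed

lemma facet_data_outer_normal:
  "facet_data Q G N c \<Longrightarrow> outer_normal Q G N c"
  by (auto simp: facet_data_def outer_normal_def)

lemma facet_data_visible:
  assumes fd: "facet_data Q G N c" and z: "z \<in> interior Q"
  shows "visible Q G A \<longleftrightarrow> N \<bullet> A > c"
proof
  assume "visible Q G A"
  then obtain n c' where on: "outer_normal Q G n c'" "n \<bullet> A > c'" by (auto simp: visible_def)
  then obtain \<mu> where "\<mu> > 0" "n = \<mu> *\<^sub>R N" "c' = \<mu> * c"
    using facet_data_outer_normal_unique[OF fd z] by blast
  then show "N \<bullet> A > c" using on(2) by simp
next
  assume "N \<bullet> A > c"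
  then show "visible Q G A" using facet_data_outer_normal[OF fd] by (auto simp: visible_def)
qed

lemma facet_data_repr:
  fixes Q :: "'b::euclidean_space set"
  assumes "polyhedron Q" and z: "z \<in> interior Q"
    and fd: "\<And>G. G facet_of Q \<Longrightarrow> facet_data Q G (NN G) (cc G)"
  shows "Q = {y. \<forall>G. G facet_of Q \<longrightarrow> NN G \<bullet> y \<le> cc G}"
proof
  show "Q \<subseteq> {y. \<forall>G. G facet_of Q \<longrightarrow> NN G \<bullet> y \<le> cc G}"
    using fd by (auto simp: facet_data_def)
next
  obtain F where "finite F" and seq: "Q = affine hull Q \<inter> \<Inter>F"
             and faces: "\<And>h. h \<in> F \<Longrightarrow> \<exists>a b. a \<noteq> 0 \<and> h = {x. a \<bullet> x \<le> b}"
             and min: "\<And>F'. F' \<subset> F \<Longrightarrow> Q \<subset> (affine hull Q) \<inter> \<Inter>F'"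
    using assms by (simp add: polyhedron_Int_affine_minimal) meson
  then obtain a b where ab: "\<And>h. h \<in> F \<Longrightarrow> a h \<noteq> 0 \<and> h = {x. a h \<bullet> x \<le> b h}"
    by metis
  have aQ: "affine hull Q = UNIV"
    using aff_dim_nonempty_interior[of Q] z aff_dim_eq_full by blast
  show "{y. \<forall>G. G facet_of Q \<longrightarrow> NN G \<bullet> y \<le> cc G} \<subseteq> Q"
  proof
    fix y assume y: "y \<in> {y. \<forall>G. G facet_of Q \<longrightarrow> NN G \<bullet> y \<le> cc G}"
    have "y \<in> h" if h: "h \<in> F" for h
    proof -
      define C where "C = Q \<inter> {x. a h \<bullet> x = b h}"
      have C: "C facet_of Q"
        using facet_of_polyhedron_explicit[OF \<open>finite F\<close> seq ab min] h C_def by blast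
      have on: "outer_normal Q C (a h) (b h)"
        using ab[OF h] seq h unfolding outer_normal_def C_def by blast
      obtain \<mu> where "\<mu> > 0" "a h = \<mu> *\<^sub>R NN C" "b h = \<mu> * cc C"
        using facet_data_outer_normal_unique[OF fd[OF C] z on] by blast
      moreover have "NN C \<bullet> y \<le> cc C" using y C by auto
      ultimately have "a h \<bullet> y \<le> b h" by (simp add: mult_left_mono)
      then show ?thesis using ab[OF h] by auto
    qed
    then show "y \<in> Q" using seq aQ by blast
  qed
qed

lemma facet_normals_not_all_orth:
  fixes Q :: "'b::euclidean_space set"
  assumes "bounded Q" "Q \<noteq> {}"
    and repr: "Q = {y. \<forall>G. G facet_of Q \<longrightarrow> NN G \<bullet> y \<le> cc G}"
    and d: "d \<noteq> 0" and orth: "\<And>G. G facet_of Q \<Longrightarrow> NN G \<bullet> d = 0"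
  shows False
proof -
  obtain y where y: "y \<in> Q" using assms by blast
  have shift: "y + s *\<^sub>R d \<in> Q" for s
  proof -
    have "NN G \<bullet> (y + s *\<^sub>R d) \<le> cc G" if "G facet_of Q" for G
      using that orth[OF that] y repr by (auto simp: inner_add_right)
    then show ?thesis by (subst repr) auto
  qed
  obtain B where B: "\<And>x. x \<in> Q \<Longrightarrow> norm x \<le> B" using assms(1) bounded_iff by blast
  define s where "s = (B + norm y + 1) / norm d"
  have nd: "norm d > 0" using d by simp
  have "norm (s *\<^sub>R d) = B + norm y + 1"
  proof -
    have "B + norm y + 1 > 0" using B[OF y] norm_ge_zero[of y] by linarith
    then show ?thesis using nd by (simp add: s_def)
  qed
  moreover have "norm (s *\<^sub>R d) \<le> norm (y + s *\<^sub>R d) + norm y"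
    by (metis add_diff_cancel_left' norm_triangle_ineq4 add.commute)
  moreover have "norm (y + s *\<^sub>R d) \<le> B" using B shift by blast
  ultimately show False by linarith
qed



lemma inner_pair_lift: "inner (nx, nt) (lift v) = inner nx v + nt * (norm v)\<^sup>2"
  by (simp add: lift_def)

lemma fst_lift[simp]: "fst (lift v) = v" and snd_lift[simp]: "snd (lift v) = (norm v)\<^sup>2"
  by (simp_all add: lift_def)

lemma gsp_card_V:
  fixes V :: "'a::euclidean_space set"
  assumes g: "generic_simplicial_polytope V"
  shows "card V \<ge> DIM('a) + 2"
proof -
  have fin: "finite V" and ad: "aff_dim (convex hull V) = int DIM('a)"
    and ns: "\<not> (int DIM('a)) simplex (convex hull V)"
    using g by (auto simp: generic_simplicial_polytope_def)
  have adV: "aff_dim V = int DIM('a)" using ad by (simp add: aff_dim_convex_hull)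
  have le: "int DIM('a) \<le> int (card V) - 1" using aff_dim_le_card[OF fin] adV by simp
  have "card V \<noteq> DIM('a) + 1"
  proof
    assume c: "card V = DIM('a) + 1"
    then have "\<not> affine_dependent V" using affine_independent_iff_card[of V] fin adV by simp
    then have "(int DIM('a)) simplex (convex hull V)"
      unfolding simplex_def using c by (intro exI[of _ V]) simp
    with ns show False by blast
  qed
  with le show ?thesis by linarith
qed

lemma lifted_polytope_polytope:
  "finite V \<Longrightarrow> polytope (lifted_polytope V)"
  unfolding lifted_polytope_def by (simp add: polytope_convex_hull)

lemma gsp_full_dim:
  fixes V :: "'a::euclidean_space set"
  assumes g: "generic_simplicial_polytope V"
  shows "interior (lifted_polytope V) \<noteq> {}"
proof -
  have fin: "finite V" and ad: "aff_dim (convex hull V) = int DIM('a)"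
    and gen: "\<forall>W. W \<subseteq> V \<and> card W = DIM('a) + 2 \<longrightarrow> \<not> (\<exists>c r. W \<subseteq> sphere c r)"
    using g by (auto simp: generic_simplicial_polytope_def)
  have adV: "aff_dim V = int DIM('a)" using ad by (simp add: aff_dim_convex_hull)
  have full: "aff_dim (lift ` V) = DIM('a \<times> real)"
  proof (rule ccontr)
    assume "aff_dim (lift ` V) \<noteq> DIM('a \<times> real)"
    then have "aff_dim (lift ` V) < DIM('a \<times> real)" using aff_dim_le_DIM[of "lift ` V"] by linarith
    then obtain n \<beta> where n: "n \<noteq> 0" "lift ` V \<subseteq> {x. n \<bullet> x = \<beta>}"
      by (rule aff_lowdim_subset_hyperplane)
    obtain nx nt where nn: "n = (nx, nt)" by fastforce
    have eq: "inner nx v + nt * (norm v)\<^sup>2 = \<beta>" if "v \<in> V" for v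
      using n(2) that nn inner_pair_lift[of nx nt v] by auto
    show False
    proof (cases "nt = 0")
      case True
      then have "nx \<noteq> 0" using n nn by (auto simp: zero_prod_def)
      have "V \<subseteq> {x. nx \<bullet> x = \<beta>}" using eq True by auto
      then have "aff_dim V \<le> aff_dim {x. nx \<bullet> x = \<beta>}" by (rule aff_dim_subset)
      also have "\<dots> = DIM('a) - 1" using \<open>nx \<noteq> 0\<close> by simp
      finally show False using adV by simp
    next
      case False
      define c0 where "c0 = (- 1 / (2 * nt)) *\<^sub>R nx"
      define K where "K = \<beta> / nt + (norm c0)\<^sup>2"
      have nv: "(norm (v - c0))\<^sup>2 = K" if "v \<in> V" for v
      proof -
        have "(norm (v - c0))\<^sup>2 = (norm v)\<^sup>2 - 2 * (v \<bullet> c0) + (norm c0)\<^sup>2"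
          by (simp add: power2_norm_eq_inner inner_diff_left inner_diff_right inner_commute)
        also have "v \<bullet> c0 = - (nx \<bullet> v) / (2 * nt)" by (simp add: c0_def inner_commute)
        also have "(nx \<bullet> v) = \<beta> - nt * (norm v)\<^sup>2" using eq[OF that] by simp
        finally show ?thesis using False by (simp add: K_def field_simps)
      qed
      have sph: "V \<subseteq> sphere c0 (sqrt K)"
      proof
        fix v assume v: "v \<in> V"
        have "dist c0 v = norm (v - c0)" by (simp add: dist_norm norm_minus_commute)
        also have "\<dots> = sqrt K" using nv[OF v] by (metis norm_ge_zero real_sqrt_abs abs_of_nonneg)
        finally show "v \<in> sphere c0 (sqrt K)" by simp
      qed
      obtain W where W: "W \<subseteq> V" "card W = DIM('a) + 2"
        using obtain_subset_with_card_n[OF gsp_card_V[OF g]] by metis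
      then show False using gen sph by blast
    qed
  qed
  have "aff_dim (lifted_polytope V) = DIM('a \<times> real)"
    using full by (simp add: lifted_polytope_def aff_dim_convex_hull)
  moreover have "convex (lifted_polytope V)" by (simp add: lifted_polytope_def)
  moreover have "lifted_polytope V \<noteq> {}"
  proof -
    have "V \<noteq> {}" using gsp_card_V[OF g] by auto
    then show ?thesis by (simp add: lifted_polytope_def)
  qed
  ultimately show ?thesis
    by (simp add: interior_rel_interior_gen rel_interior_eq_empty)
qed



lemma gsp_aff_dim_Q:
  fixes V :: "'a::euclidean_space set"
  assumes g: "generic_simplicial_polytope V"
  shows "aff_dim (lifted_polytope V) = int DIM('a) + 1"
  using aff_dim_nonempty_interior[OF gsp_full_dim[OF g]] by simp

lemma gsp_nonvertical:
  fixes V :: "'a::euclidean_space set"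
  assumes g: "generic_simplicial_polytope V"
    and G: "G facet_of (lifted_polytope V)"
    and fd: "facet_data (lifted_polytope V) G N c"
  shows "snd N \<noteq> 0"
proof
  assume s0: "snd N = 0"
  obtain nx where nxd: "N = (nx, 0)" using s0 by (metis prod.collapse)
  have nx: "nx \<noteq> 0" using fd nxd by (auto simp: facet_data_def zero_prod_def)
  have fin: "finite V" and ad: "aff_dim (convex hull V) = int DIM('a)"
    and Vext: "V = {v. v extreme_point_of (convex hull V)}"
    and fs: "\<forall>F. F facet_of (convex hull V) \<longrightarrow> (int DIM('a) - 1) simplex F"
    using g by (auto simp: generic_simplicial_polytope_def)
  let ?Q = "lifted_polytope V"
  have liftQ: "lift v \<in> ?Q" if "v \<in> V" for v
    using that hull_subset[of "lift ` V" convex] by (auto simp: lifted_polytope_def)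
  have Vle: "nx \<bullet> v \<le> c" if "v \<in> V" for v
    using liftQ[OF that] fd nxd by (auto simp: facet_data_def lift_def)
  have "G face_of convex hull (lift ` V)" using G by (simp add: facet_of_def lifted_polytope_def)
  then obtain S' where S': "S' \<subseteq> lift ` V" "G = convex hull S'"
    using face_of_convex_hull_subset[of "lift ` V" G] fin finite_imp_compact by blast
  have finS': "finite S'" using S' fin finite_subset by blast
  have "aff_dim S' = aff_dim G" using S' by (simp add: aff_dim_convex_hull)
  also have "\<dots> = int DIM('a)" using G gsp_aff_dim_Q[OF g] by (simp add: facet_of_def)
  finally have "int DIM('a) \<le> int (card S') - 1" using aff_dim_le_card[OF finS'] by simp
  then have cS': "card S' \<ge> DIM('a) + 1" by linarith
  define W where "W = fst ` S'"
  have "inj_on fst S'"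
  proof (rule inj_onI)
    fix x y assume "x \<in> S'" "y \<in> S'" "fst x = fst y"
    moreover obtain u w where "x = lift u" "y = lift w" using \<open>x \<in> S'\<close> \<open>y \<in> S'\<close> S'(1) by blast
    ultimately show "x = y" by simp
  qed
  then have cW: "card W = card S'" by (simp add: W_def card_image)
  have WV: "W \<subseteq> V" using S'(1) by (auto simp: W_def)
  have Won: "nx \<bullet> w = c" if "w \<in> W" for w
  proof -
    obtain y where y: "y \<in> S'" "w = fst y" using \<open>w \<in> W\<close> unfolding W_def by blast
    have "y \<in> G" using y(1) S'(2) hull_subset[of S' convex] by auto
    moreover have "G \<subseteq> {y. N \<bullet> y = c}" using fd unfolding facet_data_def by blast
    ultimately have "N \<bullet> y = c" by blast
    then show ?thesis using y(2) nxd by (cases y) simp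
  qed
  let ?P = "convex hull V"
  have Psub: "?P \<subseteq> {x. nx \<bullet> x \<le> c}"
    using Vle by (intro hull_minimal) (auto simp: convex_halfspace_le)
  define E where "E = ?P \<inter> {x. nx \<bullet> x = c}"
  have Ef: "E face_of ?P" unfolding E_def
    using Psub by (intro face_of_Int_supporting_hyperplane_le) auto
  have "W \<subseteq> E" using WV Won hull_subset[of V convex] by (auto simp: E_def)
  moreover have "W \<noteq> {}" using cW cS' by auto
  ultimately have Ene: "E \<noteq> {}" by blast
  have EneP: "E \<noteq> ?P"
  proof
    assume "E = ?P"
    then have "?P \<subseteq> {x. nx \<bullet> x = c}" by (auto simp: E_def)
    then have "aff_dim ?P \<le> aff_dim {x. nx \<bullet> x = c}" by (rule aff_dim_subset)
    then show False using nx ad by simp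
  qed
  have "polyhedron ?P" using fin by (simp add: polytope_convex_hull polytope_imp_polyhedron)
  then obtain F' where F': "F' facet_of ?P" "E \<subseteq> F'"
    using face_of_polyhedron_subset_facet[OF \<open>polyhedron ?P\<close> Ef Ene EneP] by blast
  have "(int DIM('a) - 1) simplex F'" using fs F'(1) by blast
  then obtain C where C: "\<not> affine_dependent C" "int (card C) = int DIM('a) - 1 + 1"
    "F' = convex hull C" unfolding simplex_def by blast
  have finC: "finite C" using C(1) aff_independent_finite by blast
  have "W \<subseteq> C"
  proof
    fix w assume w: "w \<in> W"
    have "w \<in> V" using w WV by blast
    then have "w \<in> {v. v extreme_point_of ?P}" using Vext by simp
    then have "w extreme_point_of ?P" by simp
    moreover have "w \<in> F'" using w \<open>W \<subseteq> E\<close> F' by blast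
    ultimately have "w extreme_point_of F'"
      using extreme_point_of_face[OF facet_of_imp_face_of[OF F'(1)]] by blast
    then show "w \<in> C" using C(3) extreme_point_of_convex_hull by blast
  qed
  then have "card W \<le> card C" using finC by (simp add: card_mono)
  then show False using cW cS' C(2) by linarith
qed



lemma facet_data_inj:
  assumes "facet_data Q G N c" "facet_data Q G' N' c'" "N' = \<mu> *\<^sub>R N" "c' = \<mu> * c" "\<mu> \<noteq> 0"
  shows "G = G'"
proof -
  have "{y. N' \<bullet> y = c'} = {y. N \<bullet> y = c}" using assms(3-5) by auto
  then show ?thesis using assms(1,2) by (simp add: facet_data_def)
qed

lemma BM_abstract:
  fixes Q :: "('a::euclidean_space \<times> real) set" and K :: "('a \<times> real) set \<Rightarrow> bool"
  assumes fd: "\<And>G. G facet_of Q \<Longrightarrow> facet_data Q G (NN G) (cc G)"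
    and KF: "\<And>G. K G \<Longrightarrow> G facet_of Q" and finK: "finite {G. K G}"
    and Zs: "Zs \<in> interior Q" and F: "K F"
    and g: "\<And>G. K G \<Longrightarrow> G \<noteq> F \<Longrightarrow> g G > 0"
    and AK: "\<And>\<epsilon> G. \<epsilon> > 0 \<Longrightarrow> K G \<Longrightarrow> G \<noteq> F \<Longrightarrow> cc G - NN G \<bullet> A \<epsilon> = -(g G + \<epsilon>)"
    and AF: "\<And>\<epsilon>. \<epsilon> > 0 \<Longrightarrow> cc F - NN F \<bullet> A \<epsilon> = - \<epsilon>"
    and AnK: "\<And>\<epsilon> G. \<epsilon> > 0 \<Longrightarrow> G facet_of Q \<Longrightarrow> \<not> K G \<Longrightarrow> cc G - NN G \<bullet> A \<epsilon> > 0"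
  shows "BM_last K Q F"
proof -
  define \<phi> where "\<phi> G y = cc G - NN G \<bullet> y" for G y
  have \<phi>pos: "\<phi> G Z > 0" if "G facet_of Q" "Z \<in> interior Q" for G Z
    using facet_data_interior_strict[OF fd[OF that(1)] that(2)] by (simp add: \<phi>_def)
  define S where "S = {G. K G} - {F}"
  have finS: "finite S" using finK by (simp add: S_def)
  have ev: "eventually (\<lambda>\<epsilon>. \<forall>G\<in>S. \<epsilon> * (\<phi> G Zs - \<phi> F Zs) < \<phi> F Zs * g G) (at_right 0)"
  proof (rule eventually_ball_finite[OF finS], rule ballI)
    fix G assume G: "G \<in> S"
    have pos: "\<phi> F Zs * g G > 0" using \<phi>pos[OF KF[OF F] Zs] g G by (simp add: S_def)
    have "((\<lambda>\<epsilon>. \<epsilon> * (\<phi> G Zs - \<phi> F Zs)) \<longlongrightarrow> 0 * (\<phi> G Zs - \<phi> F Zs)) (at_right 0)"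
      by (intro tendsto_intros)
    then have "((\<lambda>\<epsilon>. \<epsilon> * (\<phi> G Zs - \<phi> F Zs)) \<longlongrightarrow> 0) (at_right 0)" by simp
    then show "eventually (\<lambda>\<epsilon>. \<epsilon> * (\<phi> G Zs - \<phi> F Zs) < \<phi> F Zs * g G) (at_right 0)"
      using order_tendstoD(2)[OF _ pos] by blast
  qed
  then obtain b where b: "b > 0" "\<And>y. y > 0 \<Longrightarrow> y < b \<Longrightarrow> \<forall>G\<in>S. y * (\<phi> G Zs - \<phi> F Zs) < \<phi> F Zs * g G"
    unfolding eventually_at_right_field by blast
  define \<epsilon> where "\<epsilon> = b / 2"
  have \<epsilon>: "\<epsilon> > 0" "\<forall>G\<in>S. \<epsilon> * (\<phi> G Zs - \<phi> F Zs) < \<phi> F Zs * g G"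
    using b(1) b(2)[of "b/2"] by (auto simp: \<epsilon>_def)
  define AA where "AA = A \<epsilon>"
  define U where "U = interior Q \<inter> (\<Inter>G\<in>S. {Z. \<epsilon> * (\<phi> G Z - \<phi> F Z) < \<phi> F Z * g G})"
  have contphi: "continuous_on UNIV (\<phi> G)" for G unfolding \<phi>_def by (intro continuous_intros)
  have openU: "open U" unfolding U_def
  proof (intro open_Int open_INT[OF finS] ballI)
    fix G show "open {Z. \<epsilon> * (\<phi> G Z - \<phi> F Z) < \<phi> F Z * g G}"
      by (rule open_Collect_less) (intro continuous_intros contphi)+
  qed simp
  have "Zs \<in> U" using Zs \<epsilon> by (auto simp: U_def)
  then have nnU: "\<not> negligible U" using open_not_negligible openU by blast
  define \<delta> where "\<delta> G = - \<phi> G AA" for G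
  define bad where "bad = (\<lambda>(G,G'). {Z. (\<delta> G' *\<^sub>R NN G - \<delta> G *\<^sub>R NN G') \<bullet> Z = \<delta> G' * cc G - \<delta> G * cc G'}) ` {(G,G'). K G \<and> K G' \<and> G \<noteq> G'}"
  have \<delta>pos: "\<delta> G > 0" if "K G" for G
  proof (cases "G = F")
    case True then show ?thesis using AF[OF \<epsilon>(1)] \<epsilon> by (simp add: \<delta>_def \<phi>_def AA_def)
  next
    case False then show ?thesis using AK[OF \<epsilon>(1) that False] g[OF that False] \<epsilon>
      by (simp add: \<delta>_def \<phi>_def AA_def)
  qed
  have negbad: "negligible (\<Union>bad)"
  proof (rule negligible_Union)
    have "{(G,G'). K G \<and> K G' \<and> G \<noteq> G'} \<subseteq> {G. K G} \<times> {G. K G}" by auto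
    then show "finite bad" unfolding bad_def using finK by (meson finite_SigmaI finite_imageI finite_subset)
  next
    fix T assume "T \<in> bad"
    then obtain G G' where GG: "K G" "K G'" "G \<noteq> G'"
      and T: "T = {Z. (\<delta> G' *\<^sub>R NN G - \<delta> G *\<^sub>R NN G') \<bullet> Z = \<delta> G' * cc G - \<delta> G * cc G'}"
      unfolding bad_def by auto
    have "(\<delta> G' *\<^sub>R NN G - \<delta> G *\<^sub>R NN G') \<noteq> 0 \<or> \<delta> G' * cc G - \<delta> G * cc G' \<noteq> 0"
    proof (rule ccontr)
      assume "\<not> ?thesis"
      then have e1: "\<delta> G' *\<^sub>R NN G = \<delta> G *\<^sub>R NN G'" and e2: "\<delta> G' * cc G = \<delta> G * cc G'" by auto
      have p1: "\<delta> G > 0" "\<delta> G' > 0" using \<delta>pos GG by auto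
      have "NN G' = (1 / \<delta> G) *\<^sub>R (\<delta> G *\<^sub>R NN G')" using p1 by simp
      also have "\<dots> = (1 / \<delta> G) *\<^sub>R (\<delta> G' *\<^sub>R NN G)" using e1 by simp
      also have "\<dots> = (\<delta> G' / \<delta> G) *\<^sub>R NN G" by simp
      finally have "NN G' = (\<delta> G' / \<delta> G) *\<^sub>R NN G" .
      moreover have "cc G' = (\<delta> G' / \<delta> G) * cc G" using e2 p1 by (simp add: field_simps)
      moreover have "\<delta> G' / \<delta> G \<noteq> 0" using p1 by simp
      ultimately have "G = G'"
        by (rule facet_data_inj[OF fd[OF KF[OF GG(1)]] fd[OF KF[OF GG(2)]]])
      with GG show False by simp
    qed
    then show "negligible T" unfolding T by (rule negligible_hyperplane)
  qed
  have "\<not> U \<subseteq> \<Union>bad" using nnU negbad negligible_subset by blast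
  then obtain Z where ZU: "Z \<in> U" and Zbad: "Z \<notin> \<Union>bad" by blast
  have Zi: "Z \<in> interior Q" using ZU by (simp add: U_def)
  have ZS: "\<forall>G\<in>S. \<epsilon> * (\<phi> G Z - \<phi> F Z) < \<phi> F Z * g G" using ZU by (simp add: U_def)
  define \<alpha> where "\<alpha> G = \<phi> G Z" for G
  define lam where "lam G = \<alpha> G / (\<alpha> G + \<delta> G)" for G
  define p where "p G = Z + lam G *\<^sub>R (AA - Z)" for G
  have \<alpha>pos: "\<alpha> G > 0" if "K G" for G using \<phi>pos[OF KF[OF that] Zi] by (simp add: \<alpha>_def)
  have lam01: "0 < lam G" "lam G < 1" if "K G" for G
    using \<alpha>pos[OF that] \<delta>pos[OF that] by (auto simp: lam_def field_simps)
  have phiseg: "\<phi> G ((1 - u) *\<^sub>R Z + u *\<^sub>R AA) = (1 - u) * \<alpha> G - u * \<delta> G" for G u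
    by (simp add: \<phi>_def \<alpha>_def \<delta>_def inner_add_right algebra_simps)
  have AZ: "AA \<noteq> Z"
  proof
    assume "AA = Z"
    then have "\<delta> F = - \<alpha> F" by (simp add: \<delta>_def \<alpha>_def)
    then show False using \<delta>pos[OF F] \<alpha>pos[OF F] by simp
  qed
  have ahG: "affine hull G = {y. \<phi> G y = 0}" if "G facet_of Q" for G
    using fd[OF that] by (auto simp: facet_data_def \<phi>_def)
  have seg: "closed_segment Z AA \<inter> affine hull G = {p G}" if KG: "K G" for G
  proof -
    have pG: "p G = (1 - lam G) *\<^sub>R Z + lam G *\<^sub>R AA" by (simp add: p_def algebra_simps)
    have zero: "(1 - u) * \<alpha> G - u * \<delta> G = 0 \<longleftrightarrow> u = lam G" for u
      using \<alpha>pos[OF KG] \<delta>pos[OF KG] by (auto simp: lam_def field_simps)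
    show ?thesis
    proof
      show "closed_segment Z AA \<inter> affine hull G \<subseteq> {p G}"
      proof
        fix y assume "y \<in> closed_segment Z AA \<inter> affine hull G"
        then obtain u where u: "y = (1 - u) *\<^sub>R Z + u *\<^sub>R AA" "\<phi> G y = 0"
          using ahG[OF KF[OF KG]] by (auto simp: closed_segment_def)
        then have "u = lam G" using phiseg zero by metis
        then show "y \<in> {p G}" using u pG by simp
      qed
      show "{p G} \<subseteq> closed_segment Z AA \<inter> affine hull G"
        using lam01[OF KG] pG phiseg[of G "lam G"] zero ahG[OF KF[OF KG]]
        by (auto simp: closed_segment_def)
    qed
  qed
  have distp: "dist Z (p G) = lam G * norm (AA - Z)" if "K G" for G
    using lam01[OF that] by (simp add: p_def dist_norm)
  have inj: "inj_on p {G. K G}"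
  proof (rule inj_onI)
    fix G G' assume G: "G \<in> {G. K G}" and G': "G' \<in> {G. K G}" and eq: "p G = p G'"
    show "G = G'"
    proof (rule ccontr)
      assume ne: "G \<noteq> G'"
      have "lam G *\<^sub>R (AA - Z) = lam G' *\<^sub>R (AA - Z)" using eq by (simp add: p_def)
      then have "lam G = lam G'" using AZ by (simp add: scaleR_cancel_right)
      moreover have "\<alpha> G + \<delta> G > 0" "\<alpha> G' + \<delta> G' > 0"
        using \<alpha>pos \<delta>pos G G' by (auto intro: add_pos_pos)
      ultimately have "\<alpha> G * (\<alpha> G' + \<delta> G') = \<alpha> G' * (\<alpha> G + \<delta> G)"
        unfolding lam_def by (simp add: frac_eq_eq)
      then have "\<alpha> G * \<delta> G' = \<alpha> G' * \<delta> G" by (simp add: algebra_simps)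
      then have "(\<delta> G' *\<^sub>R NN G - \<delta> G *\<^sub>R NN G') \<bullet> Z = \<delta> G' * cc G - \<delta> G * cc G'"
        by (simp add: \<alpha>_def \<phi>_def inner_diff_left algebra_simps)
      then have "Z \<in> \<Union>bad" using G G' ne unfolding bad_def by blast
      then show False using Zbad by blast
    qed
  qed
  have last: "dist Z (p G) < dist Z (p F)" if "K G" "G \<noteq> F" for G
  proof -
    have GS: "G \<in> S" using that by (simp add: S_def)
    have dG: "\<delta> G = g G + \<epsilon>" using AK[OF \<epsilon>(1) that] by (simp add: \<delta>_def \<phi>_def AA_def)
    have dF: "\<delta> F = \<epsilon>" using AF[OF \<epsilon>(1)] by (simp add: \<delta>_def \<phi>_def AA_def)
    have "\<epsilon> * (\<alpha> G - \<alpha> F) < \<alpha> F * g G" using ZS GS by (simp add: \<alpha>_def)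
    then have "\<alpha> G * (\<alpha> F + \<delta> F) < \<alpha> F * (\<alpha> G + \<delta> G)" using dG dF by (simp add: algebra_simps)
    then have "lam G < lam F"
      using \<alpha>pos[OF that(1)] \<alpha>pos[OF F] \<delta>pos[OF that(1)] \<delta>pos[OF F]
      by (simp add: lam_def divide_less_eq less_divide_eq field_simps)
    moreover have "norm (AA - Z) > 0" using AZ by simp
    ultimately show ?thesis using distp that F by simp
  qed
  have vis: "visible Q G AA \<longleftrightarrow> K G" if "G facet_of Q" for G
  proof -
    have "visible Q G AA \<longleftrightarrow> NN G \<bullet> AA > cc G" using facet_data_visible[OF fd[OF that] Zi] .
    also have "\<dots> \<longleftrightarrow> \<delta> G > 0" by (simp add: \<delta>_def \<phi>_def)
    also have "\<dots> \<longleftrightarrow> K G"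
      using \<delta>pos AnK[OF \<epsilon>(1) that] unfolding \<delta>_def \<phi>_def AA_def by force
    finally show ?thesis .
  qed
  show ?thesis unfolding BM_last_def
    using F vis Zi seg inj last by blast
qed



lemma facet_data_scale:
  "facet_data Q G N c \<Longrightarrow> \<mu> > 0 \<Longrightarrow> facet_data Q G (\<mu> *\<^sub>R N) (\<mu> * c)"
  unfolding facet_data_def by auto

lemma gsp_normalized_data:
  fixes V :: "'a::euclidean_space set"
  assumes g: "generic_simplicial_polytope V" and G: "G facet_of (lifted_polytope V)"
  shows "\<exists>N c. facet_data (lifted_polytope V) G N c \<and> (snd N = 1 \<or> snd N = -1)"
proof -
  have fin: "finite V" using g by (simp add: generic_simplicial_polytope_def)
  have ph: "polyhedron (lifted_polytope V)"
    using lifted_polytope_polytope[OF fin] polytope_imp_polyhedron by blast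
  obtain N c where fd: "facet_data (lifted_polytope V) G N c"
    using facet_data_exists[OF ph gsp_full_dim[OF g] G] by blast
  have s: "snd N \<noteq> 0" using gsp_nonvertical[OF g G fd] .
  define \<mu> where "\<mu> = 1 / \<bar>snd N\<bar>"
  have "\<mu> > 0" using s by (simp add: \<mu>_def)
  moreover have "snd (\<mu> *\<^sub>R N) = 1 \<or> snd (\<mu> *\<^sub>R N) = -1"
    using s by (cases "snd N > 0") (auto simp: \<mu>_def)
  ultimately show ?thesis using facet_data_scale[OF fd] by blast
qed

lemma key_identity:
  assumes "s = 1 \<or> s = -1"
  shows "c - (nx, s) \<bullet> (x, t) = - s * (t - (((- s) *\<^sub>R nx) \<bullet> x + s * c))"
  using assms by (auto simp: algebra_simps)

locale lifted_setup =
  fixes V :: "'a::euclidean_space set" and NN :: "('a \<times> real) set \<Rightarrow> 'a \<times> real"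
    and cc :: "('a \<times> real) set \<Rightarrow> real"
  assumes g: "generic_simplicial_polytope V"
    and fd: "\<And>G. G facet_of (lifted_polytope V) \<Longrightarrow> facet_data (lifted_polytope V) G (NN G) (cc G)"
    and sn: "\<And>G. G facet_of (lifted_polytope V) \<Longrightarrow> snd (NN G) = 1 \<or> snd (NN G) = -1"
begin

abbreviation "Q \<equiv> lifted_polytope V"

definition sg where "sg G = snd (NN G)"
definition sl where "sl G = (- sg G) *\<^sub>R fst (NN G)"
definition ob where "ob G = sg G * cc G"
definition hh where "hh G x = sl G \<bullet> x + ob G"

lemma fin: "finite V" using g by (simp add: generic_simplicial_polytope_def)
lemma polyQ: "polyhedron Q"
  using lifted_polytope_polytope[OF fin] polytope_imp_polyhedron by blast
lemma boundedQ: "bounded Q"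
  using lifted_polytope_polytope[OF fin] polytope_imp_bounded by blast
lemma intQ: "interior Q \<noteq> {}" using gsp_full_dim[OF g] .
lemma Qne: "Q \<noteq> {}" using intQ interior_subset by blast
lemma finFac: "finite {G. G facet_of Q}" using finite_polyhedron_facets[OF polyQ] .

lemma phi_eq:
  assumes "G facet_of Q"
  shows "cc G - NN G \<bullet> (x, t) = - sg G * (t - hh G x)"
proof -
  have "cc G - NN G \<bullet> (x,t) = cc G - (fst (NN G), sg G) \<bullet> (x,t)" by (simp add: sg_def)
  also have "\<dots> = - sg G * (t - (((- sg G) *\<^sub>R fst (NN G)) \<bullet> x + sg G * cc G))"
    by (rule key_identity) (use sn[OF assms] in \<open>simp add: sg_def\<close>)
  also have "\<dots> = - sg G * (t - hh G x)" by (simp add: hh_def sl_def ob_def)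
  finally show ?thesis .
qed

lemma memQ: "(x, t) \<in> Q \<longleftrightarrow> (\<forall>G. G facet_of Q \<longrightarrow> - sg G * (t - hh G x) \<ge> 0)"
proof -
  obtain z where z: "z \<in> interior Q" using intQ by blast
  have "(x, t) \<in> Q \<longleftrightarrow> (\<forall>G. G facet_of Q \<longrightarrow> NN G \<bullet> (x,t) \<le> cc G)"
    using facet_data_repr[OF polyQ z fd] by blast
  also have "\<dots> \<longleftrightarrow> (\<forall>G. G facet_of Q \<longrightarrow> - sg G * (t - hh G x) \<ge> 0)"
    using phi_eq by (metis diff_ge_0_iff_ge)
  finally show ?thesis .
qed

lemma memF:
  assumes "G facet_of Q"
  shows "(x, t) \<in> G \<longleftrightarrow> (x, t) \<in> Q \<and> t = hh G x"
proof -
  have "G = Q \<inter> {y. NN G \<bullet> y = cc G}" using fd[OF assms] by (simp add: facet_data_def)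
  moreover have "NN G \<bullet> (x,t) = cc G \<longleftrightarrow> t = hh G x"
    using phi_eq[OF assms, of x t] sn[OF assms] by (auto simp: sg_def)
  ultimately show ?thesis by blast
qed

lemma same_affine_same_facet:
  assumes "G facet_of Q" "F facet_of Q" "sl G = sl F" "ob G = ob F"
  shows "G = F"
proof (rule set_eqI)
  fix y :: "'a \<times> real"
  obtain x t where y: "y = (x, t)" by fastforce
  have "hh G x = hh F x" using assms by (simp add: hh_def)
  then show "y \<in> G \<longleftrightarrow> y \<in> F" using memF[OF assms(1)] memF[OF assms(2)] y by simp
qed

lemma lower_iff: "lower_facet Q G \<longleftrightarrow> G facet_of Q \<and> sg G = -1"
proof -
  obtain z where z: "z \<in> interior Q" using intQ by blast
  show ?thesis
  proof
    assume L: "lower_facet Q G"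
    then obtain n c where G: "G facet_of Q" and on: "outer_normal Q G n c" "snd n < 0"
      by (auto simp: lower_facet_def)
    obtain \<mu> where "\<mu> > 0" "n = \<mu> *\<^sub>R NN G"
      using facet_data_outer_normal_unique[OF fd[OF G] z on(1)] by blast
    then have "snd (NN G) < 0" using on(2) by (simp add: mult_less_0_iff)
    then show "G facet_of Q \<and> sg G = -1" using sn[OF G] G by (auto simp: sg_def)
  next
    assume "G facet_of Q \<and> sg G = -1"
    then show "lower_facet Q G" unfolding lower_facet_def
      using facet_data_outer_normal[OF fd] by (intro conjI exI[of _ "NN G"] exI[of _ "cc G"]) (auto simp: sg_def)
  qed
qed

lemma upper_iff: "upper_facet Q G \<longleftrightarrow> G facet_of Q \<and> sg G = 1"
proof -
  obtain z where z: "z \<in> interior Q" using intQ by blast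
  show ?thesis
  proof
    assume L: "upper_facet Q G"
    then obtain n c where G: "G facet_of Q" and on: "outer_normal Q G n c" "snd n > 0"
      by (auto simp: upper_facet_def)
    obtain \<mu> where "\<mu> > 0" "n = \<mu> *\<^sub>R NN G"
      using facet_data_outer_normal_unique[OF fd[OF G] z on(1)] by blast
    then have "snd (NN G) > 0" using on(2) by (simp add: zero_less_mult_iff)
    then show "G facet_of Q \<and> sg G = 1" using sn[OF G] G by (auto simp: sg_def)
  next
    assume "G facet_of Q \<and> sg G = 1"
    then show "upper_facet Q G" unfolding upper_facet_def
      using facet_data_outer_normal[OF fd] by (intro conjI exI[of _ "NN G"] exI[of _ "cc G"]) (auto simp: sg_def)
  qed
qed

end



lemma ev_pos_at_top:
  fixes a c :: real
  assumes "a \<ge> 0" "a = 0 \<Longrightarrow> c > 0"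
  shows "eventually (\<lambda>T. T * a + c > 0) at_top"
proof (cases "a = 0")
  case True then show ?thesis using assms by simp
next
  case False
  then have a: "a > 0" using assms by simp
  show ?thesis unfolding eventually_at_top_linorder
  proof (intro exI allI impI)
    fix T assume "T \<ge> (\<bar>c\<bar> + 1) / a"
    then have "T * a \<ge> \<bar>c\<bar> + 1" using a by (simp add: divide_le_eq)
    then show "T * a + c > 0" by linarith
  qed
qed

context lifted_setup
begin

lemma fst_NN: "G facet_of Q \<Longrightarrow> fst (NN G) = (- sg G) *\<^sub>R sl G"
  using sn[of G] by (auto simp: sl_def sg_def)

lemma slopes_full: "aff_dim (sl ` {G. G facet_of Q}) = int DIM('a)"
proof (rule ccontr)
  assume "aff_dim (sl ` {G. G facet_of Q}) \<noteq> int DIM('a)"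
  then have "aff_dim (sl ` {G. G facet_of Q}) < DIM('a)"
    using aff_dim_le_DIM[of "sl ` {G. G facet_of Q}"] by linarith
  then obtain w k where w: "w \<noteq> 0" "sl ` {G. G facet_of Q} \<subseteq> {x. w \<bullet> x = k}"
    by (rule aff_lowdim_subset_hyperplane)
  obtain z where z: "z \<in> interior Q" using intQ by blast
  have repr: "Q = {y. \<forall>G. G facet_of Q \<longrightarrow> NN G \<bullet> y \<le> cc G}"
    using facet_data_repr[OF polyQ z fd] .
  show False
  proof (rule facet_normals_not_all_orth[OF boundedQ Qne repr])
    show "(w, k) \<noteq> 0" using w by (simp add: zero_prod_def)
  next
    fix G assume G: "G facet_of Q"
    have "sl G \<bullet> w = k" using w G by (auto simp: inner_commute)
    have "NN G \<bullet> (w, k) = fst (NN G) \<bullet> w + sg G * k"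
      by (cases "NN G") (simp add: sg_def)
    also have "\<dots> = sg G * (k - sl G \<bullet> w)" using fst_NN[OF G] by (simp add: algebra_simps)
    finally show "NN G \<bullet> (w, k) = 0" using \<open>sl G \<bullet> w = k\<close> by simp
  qed
qed

lemma ear_BM:
  assumes \<sigma>: "\<sigma> = 1 \<or> \<sigma> = -1" and F: "F facet_of Q" "sg F = \<sigma>"
    and x: "\<And>G. G facet_of Q \<Longrightarrow> G \<noteq> F \<Longrightarrow> \<sigma> * hh G x < \<sigma> * hh F x"
  shows "BM_last (\<lambda>G. G facet_of Q \<and> sg G = \<sigma>) Q F"
proof -
  obtain z where z: "z \<in> interior Q" using intQ by blast
  have s2: "\<sigma> * \<sigma> = 1" using \<sigma> by auto
  show ?thesis
  proof (rule BM_abstract[where NN = NN and cc = cc and Zs = z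
        and g = "\<lambda>G. \<sigma> * (hh F x - hh G x)" and A = "\<lambda>\<epsilon>. (x, hh F x + \<sigma> * \<epsilon>)"])
    show "\<And>G. G facet_of Q \<Longrightarrow> facet_data Q G (NN G) (cc G)" by (rule fd)
    show "\<And>G. G facet_of Q \<and> sg G = \<sigma> \<Longrightarrow> G facet_of Q" by simp
    show "finite {G. G facet_of Q \<and> sg G = \<sigma>}" using finFac by (rule finite_subset[rotated]) auto
    show "z \<in> interior Q" by fact
    show "F facet_of Q \<and> sg F = \<sigma>" using F by simp
    show "\<And>G. G facet_of Q \<and> sg G = \<sigma> \<Longrightarrow> G \<noteq> F \<Longrightarrow> 0 < \<sigma> * (hh F x - hh G x)"
      using x by (simp add: algebra_simps)
  next
    fix \<epsilon> :: real and G assume e: "\<epsilon> > 0" and G: "G facet_of Q \<and> sg G = \<sigma>" "G \<noteq> F"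
    have "cc G - NN G \<bullet> (x, hh F x + \<sigma> * \<epsilon>) = - \<sigma> * (hh F x + \<sigma> * \<epsilon> - hh G x)"
      using phi_eq G by simp
    also have "\<dots> = - (\<sigma> * (hh F x - hh G x) + \<epsilon>)" using s2 by (simp add: algebra_simps)
    finally show "cc G - NN G \<bullet> (x, hh F x + \<sigma> * \<epsilon>) = - (\<sigma> * (hh F x - hh G x) + \<epsilon>)" .
  next
    fix \<epsilon> :: real assume e: "\<epsilon> > 0"
    have "cc F - NN F \<bullet> (x, hh F x + \<sigma> * \<epsilon>) = - \<sigma> * (hh F x + \<sigma> * \<epsilon> - hh F x)"
      using phi_eq F by simp
    also have "\<dots> = - \<epsilon>" using s2 by (simp add: algebra_simps)
    finally show "cc F - NN F \<bullet> (x, hh F x + \<sigma> * \<epsilon>) = - \<epsilon>" .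
  next
    fix \<epsilon> :: real and G assume e: "\<epsilon> > 0" and G: "G facet_of Q" "\<not> (G facet_of Q \<and> sg G = \<sigma>)"
    have sG: "sg G = - \<sigma>" using sn[OF G(1)] G \<sigma> by (auto simp: sg_def)
    have "G \<noteq> F" using G F by auto
    then have xx: "\<sigma> * hh G x < \<sigma> * hh F x" using x G by blast
    have "cc G - NN G \<bullet> (x, hh F x + \<sigma> * \<epsilon>) = \<sigma> * (hh F x + \<sigma> * \<epsilon> - hh G x)"
      using phi_eq G sG by simp
    also have "\<dots> = \<sigma> * hh F x - \<sigma> * hh G x + \<epsilon>" using s2 by (simp add: algebra_simps)
    finally show "cc G - NN G \<bullet> (x, hh F x + \<sigma> * \<epsilon>) > 0" using xx e by simp
  qed
qed

lemma proj_sub: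
  assumes \<sigma>: "\<sigma> = 1 \<or> \<sigma> = -1" and F: "F facet_of Q" "sg F = \<sigma>" and G: "G facet_of Q" "sg G = \<sigma>"
    and eq: "fst ` F = fst ` G"
  shows "G \<subseteq> F"
proof
  fix y assume yG: "y \<in> G"
  obtain x t where y: "y = (x, t)" by fastforce
  have tG: "t = hh G x" and yQ: "(x,t) \<in> Q" using memF[OF G(1)] yG y by auto
  have "x \<in> fst ` F" using eq yG y by force
  then obtain t' where "(x, t') \<in> F" by force
  then have tF: "t' = hh F x" and y'Q: "(x,t') \<in> Q" using memF[OF F(1)] by auto
  have 1: "- \<sigma> * (t - hh F x) \<ge> 0" using yQ memQ F by blast
  have 2: "- \<sigma> * (t' - hh G x) \<ge> 0" using y'Q memQ G by blast
  have "hh G x = hh F x" using 1 2 tG tF \<sigma> by auto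
  then show "y \<in> F" using memF[OF F(1)] yQ tG y by simp
qed

lemma proj_inj:
  assumes \<sigma>: "\<sigma> = 1 \<or> \<sigma> = -1"
  shows "inj_on (\<lambda>F. fst ` F) {F. F facet_of Q \<and> sg F = \<sigma>}"
  by (rule inj_onI) (use proj_sub[OF \<sigma>] in blast)

end



context lifted_setup
begin

lemma ear_exists_sigma:
  assumes \<sigma>: "\<sigma> = 1 \<or> \<sigma> = -1"
    and u: "\<And>G. G facet_of Q \<Longrightarrow> sl G \<noteq> v \<Longrightarrow> u \<bullet> sl G < u \<bullet> v"
    and ne: "\<exists>G. G facet_of Q \<and> sg G = \<sigma> \<and> sl G = v"
    and hyp: "\<sigma> = -1 \<or> \<not> (\<exists>G. G facet_of Q \<and> sg G = -1 \<and> sl G = v)"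
  shows "\<exists>F. F facet_of Q \<and> sg F = \<sigma> \<and> sl F = v \<and> BM_last (\<lambda>G. G facet_of Q \<and> sg G = \<sigma>) Q F"
proof -
  define S where "S = {G. G facet_of Q \<and> sg G = \<sigma> \<and> sl G = v}"
  have finS: "finite S" using finFac by (rule finite_subset[rotated]) (auto simp: S_def)
  have neS: "S \<noteq> {}" using ne by (auto simp: S_def)
  define m where "m = Max ((\<lambda>G. \<sigma> * ob G) ` S)"
  have "m \<in> (\<lambda>G. \<sigma> * ob G) ` S" unfolding m_def using finS neS by (intro Max_in) auto
  then obtain F where FS: "F \<in> S" and Fm: "\<sigma> * ob F = m" by auto
  have Fmax: "\<sigma> * ob G \<le> \<sigma> * ob F" if "G \<in> S" for G
    using that finS Fm unfolding m_def by (metis (no_types, lifting) Max_ge finite_imageI imageI)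
  have F: "F facet_of Q" "sg F = \<sigma>" "sl F = v" using FS by (auto simp: S_def)
  have s0: "\<sigma> \<noteq> 0" using \<sigma> by auto
  have s2: "\<sigma> * \<sigma> = 1" using \<sigma> by auto
  have ev: "eventually (\<lambda>T. T * (u \<bullet> v - u \<bullet> sl G) + \<sigma> * (ob F - ob G) > 0) at_top"
    if G: "G facet_of Q" "G \<noteq> F" for G
  proof (rule ev_pos_at_top)
    show "u \<bullet> v - u \<bullet> sl G \<ge> 0" using u[OF G(1)] by (cases "sl G = v") auto
  next
    assume a0: "u \<bullet> v - u \<bullet> sl G = 0"
    then have slG: "sl G = v" using u[OF G(1)] by fastforce
    show "\<sigma> * (ob F - ob G) > 0"
    proof (cases "sg G = \<sigma>")
      case True
      then have "G \<in> S" using G slG by (simp add: S_def)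
      then have le: "\<sigma> * ob G \<le> \<sigma> * ob F" by (rule Fmax)
      have "ob G \<noteq> ob F" using same_affine_same_facet[OF G(1) F(1)] slG F G(2) by auto
      then have "\<sigma> * ob G \<noteq> \<sigma> * ob F" using s0 by simp
      then have "\<sigma> * ob G < \<sigma> * ob F" using le by linarith
      then show ?thesis by (simp add: right_diff_distrib)
    next
      case False
      then have sG: "sg G = - \<sigma>" using sn[OF G(1)] \<sigma> by (auto simp: sg_def)
      have sm: "\<sigma> = -1"
      proof (rule ccontr)
        assume "\<sigma> \<noteq> -1"
        then have "\<sigma> = 1" using \<sigma> by auto
        then have "sg G = -1" using sG by simp
        then show False using hyp \<open>\<sigma> \<noteq> -1\<close> G(1) slG by blast
      qed
      obtain y where yQ: "y \<in> Q" using Qne by blast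
      obtain x0 t0 where y: "y = (x0, t0)" by fastforce
      have 1: "- sg F * (t0 - hh F x0) \<ge> 0" using yQ y memQ F(1) by blast
      have 2: "- sg G * (t0 - hh G x0) \<ge> 0" using yQ y memQ G(1) by blast
      have "hh F x0 \<le> hh G x0" using 1 2 F sG sm by simp
      then have le: "ob F \<le> ob G" using slG F by (simp add: hh_def)
      have "ob G \<noteq> ob F" using same_affine_same_facet[OF G(1) F(1)] slG F G(2) by auto
      then show ?thesis using le sm by simp
    qed
  qed
  have "eventually (\<lambda>T. \<forall>G\<in>{G. G facet_of Q \<and> G \<noteq> F}.
      T * (u \<bullet> v - u \<bullet> sl G) + \<sigma> * (ob F - ob G) > 0) at_top"
    by (rule eventually_ball_finite) (use finFac ev in auto)
  then obtain T where T: "\<And>G. G facet_of Q \<Longrightarrow> G \<noteq> F \<Longrightarrow> T * (u \<bullet> v - u \<bullet> sl G) + \<sigma> * (ob F - ob G) > 0"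
    unfolding eventually_at_top_linorder by blast
  define x where "x = (\<sigma> * T) *\<^sub>R u"
  have "\<sigma> * hh G x < \<sigma> * hh F x" if G: "G facet_of Q" "G \<noteq> F" for G
  proof -
    have "\<sigma> * hh F x - \<sigma> * hh G x = (\<sigma> * \<sigma>) * T * (sl F \<bullet> u - sl G \<bullet> u) + \<sigma> * (ob F - ob G)"
      by (simp add: hh_def x_def algebra_simps)
    also have "\<dots> = T * (u \<bullet> v - u \<bullet> sl G) + \<sigma> * (ob F - ob G)"
      using s2 F(3) by (simp add: inner_commute)
    finally show ?thesis using T[OF G] by simp
  qed
  then have "BM_last (\<lambda>G. G facet_of Q \<and> sg G = \<sigma>) Q F" using ear_BM[OF \<sigma> F(1,2)] by blast
  then show ?thesis using F by blast
qed

lemma lowerK: "(\<lambda>G. G facet_of Q \<and> sg G = -1) = lower_facet Q"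
  using lower_iff by (intro ext) simp

lemma upperK: "(\<lambda>G. G facet_of Q \<and> sg G = 1) = upper_facet Q"
  using upper_iff by (intro ext) simp

lemma BM_last_K: "BM_last K Q F \<Longrightarrow> K F" by (simp add: BM_last_def)

theorem count_ears:
  "card (delaunay_BM_ears V) + card (upper_delaunay_BM_ears V) \<ge> DIM('a) + 1"
proof -
  define Fac where "Fac = {G. G facet_of Q}"
  define L where "L = sl ` Fac"
  have finL: "finite L" using finFac by (simp add: L_def Fac_def)
  define Ext where "Ext = {v. v extreme_point_of convex hull L}"
  have ExtL: "Ext \<subseteq> L" using extreme_point_of_convex_hull by (auto simp: Ext_def)
  have finExt: "finite Ext" using finite_subset[OF ExtL finL] .
  have "aff_dim Ext = aff_dim (convex hull Ext)" by (simp add: aff_dim_convex_hull)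
  also have "convex hull Ext = convex hull L" using Krein_Milman_polytope[OF finL] by (simp add: Ext_def)
  also have "aff_dim (convex hull L) = int DIM('a)"
    using slopes_full by (simp add: aff_dim_convex_hull L_def Fac_def)
  finally have "int DIM('a) \<le> int (card Ext) - 1" using aff_dim_le_card[OF finExt] by simp
  then have cExt: "card Ext \<ge> DIM('a) + 1" by linarith
  define LE where "LE = {F. BM_last (lower_facet Q) Q F}"
  define UE where "UE = {F. BM_last (upper_facet Q) Q F}"
  have LEsub: "LE \<subseteq> {F. F facet_of Q \<and> sg F = -1}"
    using BM_last_K lower_iff by (auto simp: LE_def)
  have UEsub: "UE \<subseteq> {F. F facet_of Q \<and> sg F = 1}"
    using BM_last_K upper_iff by (auto simp: UE_def)
  have finLE: "finite LE" by (rule finite_subset[OF LEsub], rule finite_subset[OF _ finFac]) auto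
  have finUE: "finite UE" by (rule finite_subset[OF UEsub], rule finite_subset[OF _ finFac]) auto
  have disj: "LE \<inter> UE = {}"
  proof -
    have False if "x \<in> LE" "x \<in> UE" for x
    proof -
      have "sg x = -1" "sg x = 1" using that LEsub UEsub by blast+
      then show False by simp
    qed
    then show ?thesis by blast
  qed
  have polyL: "polyhedron (convex hull L)"
    using finL by (simp add: polytope_convex_hull polytope_imp_polyhedron)
  have ExtE: "Ext \<subseteq> sl ` (LE \<union> UE)"
  proof
    fix v assume vE: "v \<in> Ext"
    have "{v} face_of convex hull L" using vE by (simp add: Ext_def face_of_singleton)
    then have "{v} exposed_face_of convex hull L" using exposed_face_of_polyhedron[OF polyL] by blast
    then obtain u b where ub: "convex hull L \<subseteq> {x. u \<bullet> x \<le> b}" "{v} = convex hull L \<inter> {x. u \<bullet> x = b}"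
      unfolding exposed_face_of_def by blast
    have uv: "u \<bullet> v = b" using ub(2) by blast
    have u: "u \<bullet> sl G < u \<bullet> v" if "G facet_of Q" "sl G \<noteq> v" for G
    proof -
      have "sl G \<in> convex hull L" using that hull_subset[of L convex] by (auto simp: L_def Fac_def)
      then have "u \<bullet> sl G \<le> b" "u \<bullet> sl G \<noteq> b" using ub that by auto
      then show ?thesis using uv by simp
    qed
    have vL: "v \<in> L" using vE ExtL by blast
    show "v \<in> sl ` (LE \<union> UE)"
    proof (cases "\<exists>G. G facet_of Q \<and> sg G = -1 \<and> sl G = v")
      case True
      have "\<exists>F. F facet_of Q \<and> sg F = -1 \<and> sl F = v \<and> BM_last (\<lambda>G. G facet_of Q \<and> sg G = -1) Q F"
        by (rule ear_exists_sigma[where u = u]) (use u True in auto)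
      then obtain F where
        "sl F = v" "BM_last (\<lambda>G. G facet_of Q \<and> sg G = -1) Q F" by auto
      then show ?thesis using lowerK by (auto simp: LE_def)
    next
      case False
      obtain G where G: "G facet_of Q" "sl G = v" using vL by (auto simp: L_def Fac_def)
      then have "sg G = 1" using sn[OF G(1)] False by (auto simp: sg_def)
      then have ne: "\<exists>G. G facet_of Q \<and> sg G = 1 \<and> sl G = v" using G by blast
      have "\<exists>F. F facet_of Q \<and> sg F = 1 \<and> sl F = v \<and> BM_last (\<lambda>G. G facet_of Q \<and> sg G = 1) Q F"
        by (rule ear_exists_sigma[where u = u]) (use u ne False in auto)
      then obtain F where
        "sl F = v" "BM_last (\<lambda>G. G facet_of Q \<and> sg G = 1) Q F" by auto
      then show ?thesis using upperK by (auto simp: UE_def)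
    qed
  qed
  have "card Ext \<le> card (sl ` (LE \<union> UE))" using ExtE finLE finUE by (simp add: card_mono)
  also have "\<dots> \<le> card (LE \<union> UE)" by (rule card_image_le) (use finLE finUE in simp)
  also have "\<dots> = card LE + card UE" using card_Un_disjoint[OF finLE finUE disj] .
  also have "card LE = card (delaunay_BM_ears V)"
  proof -
    have "inj_on (\<lambda>F. fst ` F) LE" using inj_on_subset[OF proj_inj LEsub] by simp
    then show ?thesis by (simp add: delaunay_BM_ears_def LE_def card_image)
  qed
  also have "card UE = card (upper_delaunay_BM_ears V)"
  proof -
    have "inj_on (\<lambda>F. fst ` F) UE" using inj_on_subset[OF proj_inj UEsub] by simp
    then show ?thesis by (simp add: upper_delaunay_BM_ears_def UE_def card_image)
  qed
  finally show ?thesis using cExt by linarith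
qed

end

theorem mainTheorem5:
  fixes V :: "'a::euclidean_space set"
  assumes "DIM('a) \<ge> 2"
    and "generic_simplicial_polytope V"
  shows "card (delaunay_BM_ears V) + card (upper_delaunay_BM_ears V) \<ge> DIM('a) + 1"
proof -
  have "\<forall>G. \<exists>N c. G facet_of (lifted_polytope V) \<longrightarrow>
      facet_data (lifted_polytope V) G N c \<and> (snd N = 1 \<or> snd N = -1)"
    using gsp_normalized_data[OF assms(2)] by blast
  then obtain NN cc where NN: "\<And>G. G facet_of (lifted_polytope V) \<Longrightarrow>
      facet_data (lifted_polytope V) G (NN G) (cc G) \<and> (snd (NN G) = 1 \<or> snd (NN G) = -1)"
    by metis
  interpret lifted_setup V NN cc
    using assms(2) NN by unfold_locales auto
  show ?thesis by (rule count_ears)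
qed


end
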